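(* Let $\mathcal G$ be a maximal compact subgroup of $O(m)$. Let $A=A_1+iA_2\in M(n,\mathbb C)$ with $A_1,A_2$ real, $A_1A_1^*\in\mathcal S_{>0}(n,\mathbb R)$, and such that: (a) $A_2A_1^*-A_1A_2^*\neq0$ if $-I\notin\mathcal G$; (b) $A_2=0$ if $-I\in\mathcal G$. Suppose either $m=2$, or $m\in\mathbb N$ and $-I\in\mathcal G$. Then there is a scalar (nonnegative) measure $\Lambda$ on $\mathcal B(S^{m-1})$ such that the measure $$\Xi(d\theta)=AA^*\Lambda(d\theta)+\overline{AA^*}\,\Lambda(-d\theta)$$ is Hermitian ($\Xi(-d\theta)=\overline{\Xi(d\theta)}$) and $\mathcal S_{\ge0}(n,\mathbb C)$-valued, its support is a finite union $\bigcup_{j=1}^{k_\Xi}C_j$ of pairwise disjoint connected components $C_j$, and $\mathcal S^{\mathrm{dom}}(\Xi)=\mathcal G$.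
   Context: $O(m)$ orthogonal group; $S^{m-1}$ Euclidean unit sphere; $M(n,\mathbb C)$ complex $n\times n$ matrices; $A^*$ conjugate transpose; $\overline A$ entrywise conjugate; $\mathcal S_{>0}(n,\mathbb R)$ real symmetric positive definite matrices; $\mathcal S_{\ge0}(n,\mathbb C)$ Hermitian positive semidefinite matrices. Orbit equivalence: subgroups $\mathcal G\sim\mathcal K$ of $GL(m,\mathbb R)$ iff $\{Gx:G\in\mathcal G\}=\{Kx:K\in\mathcal K\}$ for all $x\in\mathbb R^m$; a group is maximal if it contains every group in its equivalence class. For a (matrix-valued) measure $\mu$ on $\mathcal B(S^{m-1})$, $\mathcal S^{\mathrm{dom}}(\mu)=\{C\in M(m,\mathbb R):\mu(C^{-1}B)=\mu(B)\ \text{for all Borel }B\}$. *)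

theory Defs
  imports "HOL-Analysis.Analysis"
begin

section \<open>Real matrix groups\<close>

text \<open>Subgroup of GL(m,R).\<close>
definition matgroup :: "(real^'m^'m) set \<Rightarrow> bool" where
  "matgroup G \<longleftrightarrow> mat 1 \<in> G \<and> (\<forall>A\<in>G. \<forall>B\<in>G. A ** B \<in> G)
     \<and> (\<forall>A\<in>G. invertible A \<and> matrix_inv A \<in> G)"

text \<open>The orthogonal group O(m).\<close>
definition orth_group :: "(real^'m^'m) set" where
  "orth_group = {A. orthogonal_matrix A}"

text \<open>Orbit equivalence of subgroups of GL(m,R).\<close>
definition orbit_equiv :: "(real^'m^'m) set \<Rightarrow> (real^'m^'m) set \<Rightarrow> bool" where
  "orbit_equiv G K \<longleftrightarrow> (\<forall>x. {g *v x | g. g \<in> G} = {k *v x | k. k \<in> K})"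

text \<open>Maximal: contains every group in its orbit-equivalence class.\<close>
definition maximal_group :: "(real^'m^'m) set \<Rightarrow> bool" where
  "maximal_group G \<longleftrightarrow> matgroup G \<and> (\<forall>K. matgroup K \<and> orbit_equiv G K \<longrightarrow> K \<subseteq> G)"

text \<open>Maximal compact subgroup of O(m).\<close>
definition maximal_compact_subgroup_O :: "(real^'m^'m) set \<Rightarrow> bool" where
  "maximal_compact_subgroup_O G \<longleftrightarrow>
     matgroup G \<and> G \<subseteq> orth_group \<and> compact G \<and> maximal_group G"

section \<open>Matrices\<close>

definition cadj :: "complex^'n^'n \<Rightarrow> complex^'n^'n" where
  "cadj A = (\<chi> i j. cnj (A $ j $ i))"

definition cconj :: "complex^'n^'n \<Rightarrow> complex^'n^'n" where
  "cconj A = (\<chi> i j. cnj (A $ i $ j))"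

definition re_part :: "complex^'n^'n \<Rightarrow> real^'n^'n" where
  "re_part A = (\<chi> i j. Re (A $ i $ j))"

definition im_part :: "complex^'n^'n \<Rightarrow> real^'n^'n" where
  "im_part A = (\<chi> i j. Im (A $ i $ j))"

text \<open>Real symmetric positive definite matrices.\<close>
definition sym_pos_def :: "real^'n^'n \<Rightarrow> bool" where
  "sym_pos_def M \<longleftrightarrow> transpose M = M \<and> (\<forall>x. x \<noteq> 0 \<longrightarrow> x \<bullet> (M *v x) > 0)"

text \<open>Hermitian positive semidefinite complex matrices.\<close>
definition herm_psd :: "complex^'n^'n \<Rightarrow> bool" where
  "herm_psd M \<longleftrightarrow> cadj M = M \<and>
     (\<forall>x::complex^'n. (\<Sum>i\<in>UNIV. \<Sum>j\<in>UNIV. cnj (x $ i) * M $ i $ j * x $ j) \<in> \<real> \<and>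
        Re (\<Sum>i\<in>UNIV. \<Sum>j\<in>UNIV. cnj (x $ i) * M $ i $ j * x $ j) \<ge> 0)"

section \<open>Measures on the sphere\<close>

abbreviation S_sphere :: "(real^'m) set" where
  "S_sphere \<equiv> sphere 0 1"

text \<open>Borel sigma-algebra of the unit sphere S^{m-1}.\<close>
abbreviation sphere_borel :: "(real^'m) set set" where
  "sphere_borel \<equiv> sets (restrict_space borel (sphere (0::real^'m) 1))"

text \<open>The matrix-valued measure Xi(B) = A A^* Lambda(B) + conj(A A^*) Lambda(-B).\<close>
definition Xi_measure :: "complex^'n^'n \<Rightarrow> (real^'m) measure \<Rightarrow> (real^'m) set \<Rightarrow> complex^'n^'n" where
  "Xi_measure A \<Lambda> B =
     of_real (measure \<Lambda> B) *\<^sub>R (A ** cadj A)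
     + of_real (measure \<Lambda> (uminus ` B)) *\<^sub>R cconj (A ** cadj A)"

text \<open>Support of a matrix-valued measure on the sphere.\<close>
definition mat_supp :: "((real^'m) set \<Rightarrow> 'a::zero) \<Rightarrow> (real^'m) set" where
  "mat_supp \<mu> = {\<theta> \<in> sphere 0 1. \<forall>U. open U \<and> \<theta> \<in> U \<longrightarrow> \<mu> (U \<inter> sphere 0 1) \<noteq> 0}"

text \<open>S^dom(mu) = {C in M(m,R). mu(C^{-1}B) = mu(B) for all Borel B}, where
  C^{-1}B is the preimage of B in the sphere.\<close>
definition S_dom :: "((real^'m) set \<Rightarrow> 'a) \<Rightarrow> (real^'m^'m) set" where
  "S_dom \<mu> = {C. \<forall>B \<in> sphere_borel. \<mu> {\<theta> \<in> sphere 0 1. C *v \<theta> \<in> B} = \<mu> B}"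

end

theory Submission
  imports Defs
begin
declare transpose_matrix_vector[simp del]

typedef 'a wr = "UNIV :: 'a set" by auto

instance wr :: (finite) finite
proof
  have "(UNIV :: 'a wr set) = Abs_wr ` UNIV"
    by (metis Abs_wr_cases surj_def)
  then show "finite (UNIV :: 'a wr set)" by (metis finite finite_imageI)
qed

instantiation wr :: (finite) wellorder
begin
definition less_eq_wr :: "'a wr \<Rightarrow> 'a wr \<Rightarrow> bool" where
  "less_eq_wr x y \<longleftrightarrow> to_nat (Rep_wr x) \<le> to_nat (Rep_wr y)"
definition less_wr :: "'a wr \<Rightarrow> 'a wr \<Rightarrow> bool" where
  "less_wr x y \<longleftrightarrow> to_nat (Rep_wr x) < to_nat (Rep_wr y)"
instance
proof
  fix x y z :: "'a wr"
  show "(x < y) = (x \<le> y \<and> \<not> y \<le> x)" by (auto simp: less_eq_wr_def less_wr_def)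
  show "x \<le> x" by (simp add: less_eq_wr_def)
  show "x \<le> y \<Longrightarrow> y \<le> z \<Longrightarrow> x \<le> z" by (simp add: less_eq_wr_def)
  show "x \<le> y \<Longrightarrow> y \<le> x \<Longrightarrow> x = y"
  proof -
    assume "x \<le> y" "y \<le> x"
    then have "to_nat (Rep_wr x) = to_nat (Rep_wr y)" by (simp add: less_eq_wr_def)
    then show "x = y" by (simp add: Rep_wr_inject)
  qed
  show "x \<le> y \<or> y \<le> x" by (auto simp: less_eq_wr_def)
next
  fix P :: "'a wr \<Rightarrow> bool" and a
  assume H: "\<And>x. (\<And>y. y < x \<Longrightarrow> P y) \<Longrightarrow> P x"
  have "\<And>x. to_nat (Rep_wr x) = n \<Longrightarrow> P x" for n
  proof (induction n rule: less_induct)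
    case (less n x)
    show ?case
    proof (rule H)
      fix y assume "y < x"
      then have "to_nat (Rep_wr y) < n" using less.prems by (simp add: less_wr_def)
      then show "P y" using less.IH by blast
    qed
  qed
  then show "P a" by blast
qed
end

definition phiw :: "real^'m \<Rightarrow> real^('m wr)" where "phiw x = (\<chi> i. x $ Rep_wr i)"
definition psiw :: "real^('m wr) \<Rightarrow> real^'m" where "psiw y = (\<chi> j. y $ Abs_wr j)"

lemma psi_phi[simp]: "psiw (phiw x) = x" and phi_psi[simp]: "phiw (psiw y) = y"
  by (auto simp: phiw_def psiw_def vec_eq_iff Abs_wr_inverse Rep_wr_inverse)

lemma linear_phiw: "linear phiw" and linear_psiw: "linear psiw"
  by (auto simp: phiw_def psiw_def linear_iff vec_eq_iff)

lemma sum_wr: "(\<Sum>i\<in>UNIV. f (Rep_wr i)) = (\<Sum>j\<in>UNIV. (f j :: real))"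
proof -
  have "(\<Sum>j\<in>UNIV. f j) = (\<Sum>j\<in>Rep_wr ` UNIV. f j)"
    by (metis Rep_wr_cases UNIV_I image_eqI subsetI subset_antisym subset_UNIV)
  also have "\<dots> = (\<Sum>i\<in>UNIV. f (Rep_wr i))"
    by (subst sum.reindex) (auto simp: inj_on_def Rep_wr_inject)
  finally show ?thesis by simp
qed

lemma prod_wr: "(\<Prod>i\<in>UNIV. f (Rep_wr i)) = (\<Prod>j\<in>UNIV. (f j :: real))"
proof -
  have "(\<Prod>j\<in>UNIV. f j) = (\<Prod>j\<in>Rep_wr ` UNIV. f j)"
    by (metis Rep_wr_cases UNIV_I image_eqI subsetI subset_antisym subset_UNIV)
  also have "\<dots> = (\<Prod>i\<in>UNIV. f (Rep_wr i))"
    by (subst prod.reindex) (auto simp: inj_on_def Rep_wr_inject)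
  finally show ?thesis by simp
qed

lemma norm_psiw: "norm (psiw y) = norm y"
proof -
  have "inner (psiw y) (psiw y) = inner y y"
    unfolding inner_vec_def psiw_def
    using sum_wr[of "\<lambda>j. inner (y $ Abs_wr j) (y $ Abs_wr j)"]
    by (simp add: Rep_wr_inverse)
  then show ?thesis by (simp add: norm_eq_sqrt_inner)
qed

lemma prod_Basis_cart: "(\<Prod>b\<in>(Basis::(real^'n) set). f b) = (\<Prod>i\<in>UNIV. f (axis i 1))"
proof -
  have eq: "(Basis::(real^'n) set) = range (\<lambda>i. axis i (1::real))" by (auto simp: Basis_vec_def)
  show ?thesis unfolding eq
    by (subst prod.reindex) (auto simp: inj_on_def axis_eq_axis)
qed

lemma psiw_borel[measurable]: "psiw \<in> borel_measurable borel"
  by (intro borel_measurable_continuous_onI linear_continuous_on) (simp add: linear_psiw linear_linear)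
lemma phiw_borel[measurable]: "phiw \<in> borel_measurable borel"
  by (intro borel_measurable_continuous_onI linear_continuous_on) (simp add: linear_phiw linear_linear)

lemma lborel_wr: "distr lborel borel psiw = (lborel :: (real^'m) measure)"
proof (rule lborel_eqI[symmetric])
  fix l u :: "real^'m"
  assume le: "\<And>b. b \<in> Basis \<Longrightarrow> l \<bullet> b \<le> u \<bullet> b"
  have le': "l $ i \<le> u $ i" for i using le[of "axis i 1"] by (simp add: inner_axis)
  have eq: "psiw -` box l u = box (phiw l) (phiw u)"
  proof (auto simp: mem_box_cart psiw_def phiw_def Abs_wr_inverse)
    fix x :: "real^'m wr" and i
    assume "\<forall>i. l $ Rep_wr i < x $ i \<and> x $ i < u $ Rep_wr i"
    then have "l $ Rep_wr (Abs_wr i) < x $ Abs_wr i \<and> x $ Abs_wr i < u $ Rep_wr (Abs_wr i)" by blast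
    then show "l $ i < x $ Abs_wr i" "x $ Abs_wr i < u $ i" by (simp_all add: Abs_wr_inverse)
  next
    fix x :: "real^'m wr" and i
    assume "\<forall>i. l $ i < x $ Abs_wr i \<and> x $ Abs_wr i < u $ i"
    then have "l $ Rep_wr i < x $ Abs_wr (Rep_wr i) \<and> x $ Abs_wr (Rep_wr i) < u $ Rep_wr i" by blast
    then show "l $ Rep_wr i < x $ i" "x $ i < u $ Rep_wr i" by (simp_all add: Rep_wr_inverse)
  qed
  have "emeasure (distr lborel borel psiw) (box l u) = emeasure lborel (box (phiw l) (phiw u))"
    by (simp add: emeasure_distr eq)
  also have "\<dots> = (\<Prod>b\<in>Basis. (phiw u - phiw l) \<bullet> b)"
    using le' by (intro emeasure_lborel_box) (auto simp: phiw_def Basis_vec_def inner_axis)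
  also have "(\<Prod>b\<in>Basis. (phiw u - phiw l) \<bullet> b) = (\<Prod>b\<in>Basis. (u - l) \<bullet> b)"
    using prod_wr[of "\<lambda>j. (u - l) $ j"] by (simp add: prod_Basis_cart inner_axis phiw_def)
  finally show "emeasure (distr lborel borel psiw) (box l u) = (\<Prod>b\<in>Basis. (u - l) \<bullet> b)"
    by simp
qed simp

lemma mvm_borel[measurable]: "(\<lambda>y. (g::real^'m^'m) *v y) \<in> borel_measurable borel"
  by (intro borel_measurable_continuous_onI linear_continuous_on) (auto simp: linear_linear)

lemma emeasure_lborel_bounded:
  fixes X :: "'a::euclidean_space set"
  assumes "X \<in> sets borel" "bounded X"
  shows "emeasure lborel X = ennreal (measure lebesgue X)"
proof -
  obtain r where "X \<subseteq> ball 0 r" using bounded_subset_ballD assms by blast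
  then have "emeasure lborel X \<le> emeasure lborel (ball (0::'a) r)"
    by (intro emeasure_mono) auto
  then have "emeasure lborel X \<noteq> top"
    using emeasure_lborel_ball_finite[of "0::'a" r] by (auto simp: top_unique)
  then have "emeasure lborel X = ennreal (measure lborel X)"
    by (rule emeasure_eq_ennreal_measure)
  also have "measure lborel X = measure lebesgue X"
    using assms by simp
  finally show ?thesis .
qed

lemma orth_mat_inv:
  assumes "orthogonal_matrix (g::real^'m^'m)"
  shows "transpose g *v (g *v y) = y" "g *v (transpose g *v y) = y"
  using assms by (auto simp: orthogonal_matrix_def matrix_vector_mul_assoc)

lemma orth_norm:
  assumes "orthogonal_matrix (g::real^'m^'m)"
  shows "norm (g *v y) = norm y"
proof -
  have "orthogonal_transformation (\<lambda>y. g *v y)"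
    using assms by (simp add: orthogonal_transformation_matrix)
  then show ?thesis by (simp add: orthogonal_transformation)
qed

lemma norm_phiw: "norm (phiw x) = norm x"
  using norm_psiw[of "phiw x"] by simp

lemma bounded_vimage_norm:
  assumes "bounded E" "\<And>y. norm (f y) = norm y"
  shows "bounded (f -` E)"
proof -
  obtain r where r: "E \<subseteq> ball 0 r" using bounded_subset_ballD assms by blast
  have "f -` E \<subseteq> ball 0 r"
    using r assms(2) by auto
  then show ?thesis using bounded_subset bounded_ball by blast
qed

lemma lborel_orth:
  fixes E :: "(real^'m) set"
  assumes g: "orthogonal_matrix (g::real^'m^'m)" and E: "E \<in> sets borel" "bounded E"
  shows "emeasure lborel ((\<lambda>y. g *v y) -` E) = emeasure lborel E"
proof -
  have key: "emeasure lborel X = emeasure lborel (psiw -` X)" if "X \<in> sets borel" for X :: "(real^'m) set"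
  proof -
    have "emeasure lborel X = emeasure (distr lborel borel psiw) X" by (simp add: lborel_wr)
    also have "\<dots> = emeasure lborel (psiw -` X)"
      using that by (subst emeasure_distr) auto
    finally show ?thesis .
  qed
  define T' where "T' = (\<lambda>z. phiw (transpose g *v psiw z))"
  have gT: "orthogonal_matrix (transpose g)" using g by simp
  have T': "orthogonal_transformation T'"
    unfolding orthogonal_transformation T'_def
  proof
    have "linear (phiw \<circ> (\<lambda>y. transpose g *v y) \<circ> psiw)"
      by (intro linear_compose linear_phiw linear_psiw matrix_vector_mul_linear)
    then show "linear (\<lambda>z. phiw (transpose g *v psiw z))" by (simp add: o_def)
    show "\<forall>v. norm (phiw (transpose g *v psiw v)) = norm v"
      using orth_norm[OF gT] by (simp add: norm_phiw norm_psiw)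
  qed
  let ?Y = "psiw -` E"
  have eq: "psiw -` ((\<lambda>y. g *v y) -` E) = T' ` ?Y"
  proof
    show "psiw -` (\<lambda>y. g *v y) -` E \<subseteq> T' ` ?Y"
    proof
      fix y assume y: "y \<in> psiw -` (\<lambda>y. g *v y) -` E"
      show "y \<in> T' ` ?Y"
      proof
        show "y = T' (phiw (g *v psiw y))"
          by (simp add: T'_def orth_mat_inv[OF g])
        show "phiw (g *v psiw y) \<in> ?Y" using y by simp
      qed
    qed
    show "T' ` ?Y \<subseteq> psiw -` (\<lambda>y. g *v y) -` E"
      by (auto simp: T'_def orth_mat_inv[OF g])
  qed
  have Yb: "?Y \<in> sets borel" using measurable_sets_borel[OF psiw_borel E(1)] by simp
  have Ybd: "bounded ?Y" using E by (intro bounded_vimage_norm) (auto simp: norm_psiw)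
  have Ym: "?Y \<in> lmeasurable"
    using Yb Ybd by (intro bounded_set_imp_lmeasurable) auto
  have m: "measure lebesgue (T' ` ?Y) = measure lebesgue ?Y"
    by (rule measure_orthogonal_image[OF T' Ym])
  have gEb: "(\<lambda>y. g *v y) -` E \<in> sets borel" using measurable_sets_borel[OF mvm_borel E(1)] by simp
  have gEb2: "psiw -` ((\<lambda>y. g *v y) -` E) \<in> sets borel" using measurable_sets_borel[OF psiw_borel gEb] by simp
  have gEbd: "bounded (psiw -` ((\<lambda>y. g *v y) -` E))"
    using E by (intro bounded_vimage_norm) (auto simp: norm_psiw orth_norm[OF g])
  have "emeasure lborel ((\<lambda>y. g *v y) -` E) = emeasure lborel (psiw -` ((\<lambda>y. g *v y) -` E))"
    by (rule key[OF gEb])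
  also have "\<dots> = ennreal (measure lebesgue (T' ` ?Y))"
    using gEbd gEb2 by (subst emeasure_lborel_bounded) (auto simp: eq[symmetric])
  also have "\<dots> = emeasure lborel ?Y"
    using m Yb Ybd by (simp add: emeasure_lborel_bounded)
  also have "\<dots> = emeasure lborel E" using key[OF E(1)] by simp
  finally show ?thesis .
qed

definition Nrm :: "real^'m \<Rightarrow> real^'m" where
  "Nrm y = (if y = 0 then axis undefined 1 else inverse (norm y) *\<^sub>R y)"

definition Dset :: "(real^'m) set" where "Dset = ball 0 1 - {0}"

definition sig :: "(real^'m) measure" where
  "sig = distr (restrict_space lborel Dset) (restrict_space borel (sphere 0 1)) Nrm"

lemma Nrm_sphere: "Nrm y \<in> sphere 0 1"
  by (auto simp: Nrm_def norm_axis_1)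

lemma Dset_sets: "Dset \<in> sets borel"
  unfolding Dset_def by auto

lemma Nrm_meas: "Nrm \<in> measurable (restrict_space lborel Dset) (restrict_space borel (sphere 0 1))"
proof (rule measurable_restrict_space2)
  show "Nrm \<in> space (restrict_space lborel Dset) \<rightarrow> sphere 0 1" using Nrm_sphere by auto
  have "Nrm \<in> borel_measurable borel"
    unfolding Nrm_def by measurable
  then show "Nrm \<in> borel_measurable (restrict_space lborel Dset)"
    by (intro measurable_restrict_space1) (simp add: measurable_lborel1)
qed

lemma sets_sig[simp]: "sets sig = sphere_borel"
  by (simp add: sig_def)

lemma space_sig[simp]: "space sig = sphere 0 1"
  by (simp add: sig_def space_restrict_space)

lemma emeasure_sig:
  assumes "B \<in> sphere_borel"
  shows "emeasure sig B = emeasure lborel (Nrm -` B \<inter> Dset)"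
proof -
  have "emeasure sig B = emeasure (restrict_space lborel Dset) (Nrm -` B \<inter> Dset)"
    unfolding sig_def using assms by (subst emeasure_distr[OF Nrm_meas]) (auto simp: space_restrict_space)
  also have "\<dots> = emeasure lborel (Nrm -` B \<inter> Dset)"
    by (rule emeasure_restrict_space) (auto simp: Dset_sets)
  finally show ?thesis .
qed


lemma sphere_borel_iff: "B \<in> sphere_borel \<longleftrightarrow> (\<exists>B0 \<in> sets borel. B = B0 \<inter> sphere 0 1)"
  by (auto simp: sets_restrict_space)

lemma sphere_borel_borel: "B \<in> sphere_borel \<Longrightarrow> B \<in> sets borel"
  by (auto simp: sphere_borel_iff)

lemma sphere_borel_sub: "B \<in> sphere_borel \<Longrightarrow> B \<subseteq> sphere 0 1"
  by (auto simp: sphere_borel_iff)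

lemma sphere_borel_I: "B \<in> sets borel \<Longrightarrow> B \<subseteq> sphere 0 1 \<Longrightarrow> B \<in> sphere_borel"
  unfolding sphere_borel_iff by (rule bexI[of _ B]) auto

lemma pre_borel:
  assumes "B \<in> sphere_borel"
  shows "{\<theta> \<in> sphere 0 1. (g::real^'m^'m) *v \<theta> \<in> B} \<in> sphere_borel"
proof (rule sphere_borel_I)
  have "{\<theta> \<in> sphere 0 1. g *v \<theta> \<in> B} = sphere 0 1 \<inter> (\<lambda>y. g *v y) -` B" by auto
  also have "\<dots> \<in> sets borel"
    using measurable_sets_borel[OF mvm_borel sphere_borel_borel[OF assms]] by auto
  finally show "{\<theta> \<in> sphere 0 1. g *v \<theta> \<in> B} \<in> sets borel" .
qed auto

lemma Nrm_nz: "y \<noteq> 0 \<Longrightarrow> Nrm y = inverse (norm y) *\<^sub>R y"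
  by (simp add: Nrm_def)

lemma Nrm_pre_borel:
  assumes B: "B \<in> sphere_borel"
  shows "Nrm -` B \<inter> Dset \<in> sets borel"
proof -
  have "Nrm \<in> borel_measurable borel" unfolding Nrm_def by measurable
  from measurable_sets_borel[OF this sphere_borel_borel[OF B]] show ?thesis
    using Dset_sets by auto
qed

lemma sig_inv:
  assumes g: "orthogonal_matrix (g::real^'m^'m)" and B: "B \<in> sphere_borel"
  shows "emeasure sig {\<theta> \<in> sphere 0 1. g *v \<theta> \<in> B} = emeasure sig B"
proof -
  let ?E = "Nrm -` B \<inter> Dset"
  have Eb: "?E \<in> sets borel" by (rule Nrm_pre_borel[OF B])
  have Ebd: "bounded ?E"
    by (rule bounded_subset[of "ball 0 1"]) (auto simp: Dset_def)
  have key: "Nrm (g *v y) = g *v Nrm y" if "y \<noteq> 0" for y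
  proof -
    have "g *v y \<noteq> 0" using that orth_norm[OF g, of y] by auto
    then show ?thesis using that by (simp add: Nrm_nz orth_norm[OF g] matrix_vector_mult_scaleR)
  qed
  have Dg: "g *v y \<in> Dset \<longleftrightarrow> y \<in> Dset" for y
  proof -
    have "g *v y = 0 \<longleftrightarrow> y = 0" using orth_norm[OF g, of y] by (metis norm_eq_zero)
    then show ?thesis by (auto simp: Dset_def orth_norm[OF g])
  qed
  have eq: "Nrm -` {\<theta> \<in> sphere 0 1. g *v \<theta> \<in> B} \<inter> Dset = (\<lambda>y. g *v y) -` ?E"
  proof (intro set_eqI)
    fix y
    show "y \<in> Nrm -` {\<theta> \<in> sphere 0 1. g *v \<theta> \<in> B} \<inter> Dset \<longleftrightarrow> y \<in> (\<lambda>y. g *v y) -` ?E"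
    proof (cases "y \<in> Dset")
      case True
      then have "y \<noteq> 0" by (auto simp: Dset_def)
      then show ?thesis using True Dg[of y] key[of y] Nrm_sphere[of y] by auto
    next
      case False
      then show ?thesis using Dg[of y] by auto
    qed
  qed
  show ?thesis
    using emeasure_sig[OF pre_borel[OF B]] emeasure_sig[OF B] eq lborel_orth[OF g Eb Ebd]
    by simp
qed

lemma sig_finite: "emeasure (sig::(real^'m) measure) (sphere 0 1) < \<infinity>"
proof -
  have "emeasure (sig::(real^'m) measure) (sphere 0 1) = emeasure lborel (Nrm -` sphere (0::real^'m) 1 \<inter> Dset)"
    using emeasure_sig[of "sphere (0::real^'m) 1"] sphere_borel_I[of "sphere (0::real^'m) 1"] by auto
  also have "\<dots> \<le> emeasure lborel (ball (0::real^'m) 1)"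
    by (intro emeasure_mono) (auto simp: Dset_def)
  also have "\<dots> < \<infinity>" by (rule emeasure_lborel_ball_finite)
  finally show ?thesis .
qed

lemma sig_pos:
  assumes W: "open W" and p: "p \<in> W \<inter> sphere 0 1"
  shows "emeasure sig (W \<inter> sphere (0::real^'m) 1) > 0"
proof -
  have Wb: "W \<inter> sphere 0 1 \<in> sphere_borel"
    using W by (intro sphere_borel_I) auto
  let ?f = "\<lambda>y::real^'m. inverse (norm y) *\<^sub>R y"
  have cont: "continuous_on Dset ?f"
    by (intro continuous_intros) (auto simp: Dset_def)
  have oD: "open Dset" by (simp add: Dset_def open_Diff)
  let ?O = "Dset \<inter> ?f -` W"
  have oO: "open ?O" by (rule continuous_open_preimage[OF cont oD W])
  have pO: "(1/2) *\<^sub>R p \<in> ?O"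
    using p by (auto simp: Dset_def)
  obtain r where r: "r > 0" "ball ((1/2) *\<^sub>R p) r \<subseteq> ?O"
    using oO pO open_contains_ball by blast
  have sub: "ball ((1/2) *\<^sub>R p) r \<subseteq> Nrm -` (W \<inter> sphere 0 1) \<inter> Dset"
  proof
    fix x assume "x \<in> ball ((1/2) *\<^sub>R p) r"
    then have x: "x \<in> ?O" using r(2) by blast
    then have "x \<noteq> 0" by (auto simp: Dset_def)
    then show "x \<in> Nrm -` (W \<inter> sphere 0 1) \<inter> Dset"
      using x Nrm_sphere[of x] by (simp add: Nrm_nz)
  qed
  have "0 < emeasure lborel (ball ((1/2) *\<^sub>R p) r)"
    using r(1) by (simp add: emeasure_ball)
  also have "\<dots> \<le> emeasure lborel (Nrm -` (W \<inter> sphere 0 1) \<inter> Dset)"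
    by (rule emeasure_mono[OF sub]) (use Nrm_pre_borel[OF Wb] in auto)
  also have "\<dots> = emeasure sig (W \<inter> sphere 0 1)"
    by (rule emeasure_sig[OF Wb, symmetric])
  finally show ?thesis .
qed

lemma digits:
  fixes b c :: "nat \<Rightarrow> real"
  assumes b: "\<And>k. b k = 0 \<or> b k = 1" and c: "\<And>k. c k = 0 \<or> c k = 1"
    and eq: "(\<Sum>k. (1/4)^k * b k) = (\<Sum>k. (1/4)^k * c k)"
  shows "b k = c k"
proof (rule ccontr)
  assume ne: "b k \<noteq> c k"
  define k0 where "k0 = (LEAST j. b j \<noteq> c j)"
  have k0: "b k0 \<noteq> c k0" using ne unfolding k0_def by (rule LeastI)
  have lt: "\<And>j. j < k0 \<Longrightarrow> b j = c j" unfolding k0_def using not_less_Least by blast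
  define d where "d n = (1/4::real)^n * (b n - c n)" for n
  have dn: "\<bar>d n\<bar> \<le> (1/4)^n" for n using b[of n] c[of n] by (auto simp: d_def abs_mult)
  have sg: "summable (\<lambda>n. (1/4::real)^n)" by (rule summable_geometric) simp
  have sd: "summable d" by (rule summable_comparison_test'[OF sg]) (use dn in auto)
  have bn: "\<bar>b n\<bar> \<le> 1" "\<bar>c n\<bar> \<le> 1" for n using b[of n] c[of n] by auto
  have sb: "summable (\<lambda>n. (1/4::real)^n * b n)"
    by (rule summable_comparison_test'[OF sg]) (use bn in \<open>auto simp: abs_mult intro: mult_left_le\<close>)
  have sc: "summable (\<lambda>n. (1/4::real)^n * c n)"
    by (rule summable_comparison_test'[OF sg]) (use bn in \<open>auto simp: abs_mult intro: mult_left_le\<close>)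
  have "suminf d = 0"
  proof -
    have "d = (\<lambda>n. (1/4)^n * b n - (1/4)^n * c n)" by (auto simp: d_def fun_eq_iff right_diff_distrib)
    then show ?thesis using suminf_diff[OF sb sc] eq by simp
  qed
  moreover have "suminf d = (\<Sum>n. d (n + k0)) + (\<Sum>i<k0. d i)"
    by (rule suminf_split_initial_segment[OF sd])
  moreover have "(\<Sum>i<k0. d i) = 0" using lt by (simp add: d_def)
  moreover have sdk: "summable (\<lambda>n. d (n + k0))" using sd by simp
  moreover have "(\<Sum>n. d (n + k0)) = d k0 + (\<Sum>n. d (Suc n + k0))"
    using suminf_split_head[OF sdk] by simp
  moreover have "\<bar>\<Sum>n. d (Suc n + k0)\<bar> \<le> (1/4)^k0 / 3"
  proof -
    have s1: "summable (\<lambda>n. d (n + Suc k0))" using sd by (simp only: summable_iff_shift)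
    have s3: "summable (\<lambda>n. (1/4::real)^(Suc k0) * (1/4)^n)" by (rule summable_mult[OF sg])
    have pw: "(1/4::real)^(n + Suc k0) = (1/4)^(Suc k0) * (1/4)^n" for n
      by (simp only: power_add mult.commute)
    have dn2: "\<bar>d (n + Suc k0)\<bar> \<le> (1/4)^(Suc k0) * (1/4)^n" for n
      using dn[of "n + Suc k0"] pw[of n] by simp
    have s2: "summable (\<lambda>n. \<bar>d (n + Suc k0)\<bar>)"
      by (rule summable_comparison_test'[OF s3]) (use dn2 in simp)
    have "\<bar>\<Sum>n. d (Suc n + k0)\<bar> = \<bar>\<Sum>n. d (n + Suc k0)\<bar>" by simp
    also have "\<dots> \<le> (\<Sum>n. \<bar>d (n + Suc k0)\<bar>)" by (rule summable_rabs[OF s2])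
    also have "\<dots> \<le> (\<Sum>n. (1/4)^(Suc k0) * (1/4)^n)"
      by (rule suminf_le[OF _ s2 s3]) (use dn2 in simp)
    also have "\<dots> = (1/4)^(Suc k0) * (4/3)"
    proof -
      have geo: "(\<Sum>n. (1/4::real)^n) = 4/3" by (subst suminf_geometric) auto
      show ?thesis by (simp only: suminf_mult[OF sg] geo)
    qed
    also have "\<dots> = (1/4)^k0 / 3" by simp
    finally show ?thesis .
  qed
  moreover have "\<bar>d k0\<bar> = (1/4)^k0" using b[of k0] c[of k0] k0 by (auto simp: d_def)
  moreover have "(1/4::real)^k0 > 0" by simp
  ultimately show False by linarith
qed


lemma matrix_inv_eq:
  fixes A B :: "real^'m^'m"
  assumes "A ** B = mat 1" "B ** A = mat 1"
  shows "matrix_inv A = B" "invertible A"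
proof -
  show inv: "invertible A" using assms unfolding invertible_def by blast
  let ?M = "matrix_inv A"
  have M: "A ** ?M = mat 1 \<and> ?M ** A = mat 1"
    unfolding matrix_inv_def by (rule someI_ex) (use inv in \<open>auto simp: invertible_def\<close>)
  have "?M = ?M ** (A ** B)" using assms by simp
  also have "\<dots> = (?M ** A) ** B" by (simp add: matrix_mul_assoc)
  also have "\<dots> = B" using M by simp
  finally show "matrix_inv A = B" .
qed

lemma orth_inv:
  assumes "orthogonal_matrix (g::real^'m^'m)"
  shows "matrix_inv g = transpose g" "invertible g"
  using assms matrix_inv_eq[of g "transpose g"] by (auto simp: orthogonal_matrix_def)

definition OG :: "(real^'m^'m) set \<Rightarrow> bool" where
  "OG G \<longleftrightarrow> matgroup G \<and> G \<subseteq> orth_group"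

lemma OG_orth: "OG G \<Longrightarrow> g \<in> G \<Longrightarrow> orthogonal_matrix g"
  by (auto simp: OG_def orth_group_def)

lemma OG_one: "OG G \<Longrightarrow> mat 1 \<in> G"
  by (auto simp: OG_def matgroup_def)

lemma OG_mul: "OG G \<Longrightarrow> g \<in> G \<Longrightarrow> h \<in> G \<Longrightarrow> g ** h \<in> G"
  by (auto simp: OG_def matgroup_def)

lemma OG_tr: assumes "OG G" "g \<in> G" shows "transpose g \<in> G"
proof -
  have "matrix_inv g \<in> G" using assms by (auto simp: OG_def matgroup_def)
  then show ?thesis using orth_inv(1)[OF OG_orth[OF assms]] by simp
qed

definition bas :: "(real^'m) set set" where
  "bas = (SOME B. countable B \<and> topological_basis B)"

lemma bas0: "countable (bas::(real^'m) set set) \<and> topological_basis (bas::(real^'m) set set)"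
  unfolding bas_def by (rule someI_ex[OF ex_countable_basis])

lemma bas_countable: "countable (bas::(real^'m) set set)" using bas0 by blast

lemma bas_open: "C \<in> (bas::(real^'m) set set) \<Longrightarrow> open C"
  using bas0 by (auto simp: topological_basis_def)

lemma bas_pt: "open Ob \<Longrightarrow> x \<in> Ob \<Longrightarrow> \<exists>C\<in>(bas::(real^'m) set set). x \<in> C \<and> C \<subseteq> Ob"
  using bas0 topological_basis_iff[of bas, OF bas_open] by blast

lemma bas_ne: "(bas::(real^'m) set set) \<noteq> {}"
  using bas_pt[of UNIV] by blast

definition Vb :: "nat \<Rightarrow> (real^'m) set" where "Vb n = from_nat_into bas n"

lemma Vb_open: "open (Vb n)"
  unfolding Vb_def using bas_open from_nat_into[OF bas_ne] by blast

lemma Vb_basis: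
  assumes "open Ob" "x \<in> Ob"
  shows "\<exists>k. x \<in> Vb k \<and> Vb k \<subseteq> Ob"
proof -
  obtain C where C: "C \<in> bas" "x \<in> C" "C \<subseteq> Ob" using bas_pt[OF assms] by blast
  obtain n where "from_nat_into bas n = C" using from_nat_into_surj[OF bas_countable] C by blast
  then show ?thesis using C unfolding Vb_def by blast
qed

definition UG :: "(real^'m^'m) set \<Rightarrow> nat \<Rightarrow> (real^'m) set" where
  "UG G k = (\<Union>g\<in>G. (\<lambda>x. g *v x) ` Vb k)"

lemma UG_open:
  assumes "OG G" shows "open (UG G k)"
  unfolding UG_def
proof (intro open_UN ballI)
  fix g assume g: "g \<in> G"
  have "(\<lambda>x. g *v x) ` Vb k = (\<lambda>x. transpose g *v x) -` Vb k"
    using orth_mat_inv[OF OG_orth[OF assms g]] by (auto intro!: image_eqI)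
  moreover have "open ((\<lambda>x. transpose g *v x) -` Vb k)"
    using continuous_open_preimage[OF _ open_UNIV Vb_open, of "\<lambda>x. transpose g *v x"]
    by (simp add: linear_continuous_on linear_linear)
  ultimately show "open ((\<lambda>x. g *v x) ` Vb k)" by simp
qed

lemma UG_inv:
  assumes G: "OG G" and h: "h \<in> G"
  shows "h *v x \<in> UG G k \<longleftrightarrow> x \<in> UG G k"
proof
  assume "h *v x \<in> UG G k"
  then obtain g v where g: "g \<in> G" "v \<in> Vb k" "h *v x = g *v v" unfolding UG_def by blast
  have "x = transpose h *v (h *v x)" using orth_mat_inv[OF OG_orth[OF G h]] by simp
  also have "\<dots> = (transpose h ** g) *v v" using g by (simp add: matrix_vector_mul_assoc)
  finally show "x \<in> UG G k" unfolding UG_def using g OG_mul[OF G OG_tr[OF G h] g(1)] by blast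
next
  assume "x \<in> UG G k"
  then obtain g v where g: "g \<in> G" "v \<in> Vb k" "x = g *v v" unfolding UG_def by blast
  then have "h *v x = (h ** g) *v v" by (simp add: matrix_vector_mul_assoc)
  then show "h *v x \<in> UG G k" unfolding UG_def using g OG_mul[OF G h g(1)] by blast
qed

definition fG :: "(real^'m^'m) set \<Rightarrow> real^'m \<Rightarrow> real" where
  "fG G x = 1 + (\<Sum>k. (1/4)^k * indicator (UG G k) x)"

lemma fG_summable: "summable (\<lambda>k. (1/4::real)^k * indicator (UG G k) x)"
  by (rule summable_comparison_test'[OF summable_geometric[of "1/4::real"]])
     (auto simp: indicator_def)

lemma fG_bounds: "1 \<le> fG G x" "fG G x \<le> 3"
proof -
  have "0 \<le> (\<Sum>k. (1/4::real)^k * indicator (UG G k) x)"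
    by (rule suminf_nonneg[OF fG_summable]) auto
  then show "1 \<le> fG G x" by (simp add: fG_def)
  have "(\<Sum>k. (1/4::real)^k * indicator (UG G k) x) \<le> (\<Sum>k. (1/4::real)^k)"
    by (rule suminf_le[OF _ fG_summable summable_geometric]) (auto simp: indicator_def)
  also have "\<dots> = 4/3" by (subst suminf_geometric) auto
  finally show "fG G x \<le> 3" by (simp add: fG_def)
qed

lemma fG_borel:
  assumes "OG G" shows "fG G \<in> borel_measurable borel"
proof -
  have "\<And>k. (\<lambda>x. (1/4::real)^k * indicator (UG G k) x) \<in> borel_measurable borel"
    using UG_open[OF assms] by (intro borel_measurable_times borel_measurable_const borel_measurable_indicator) auto
  then show ?thesis unfolding fG_def by measurable
qed

lemma fG_inv:
  assumes "OG G" "h \<in> G" shows "fG G (h *v x) = fG G x"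
  unfolding fG_def indicator_def using UG_inv[OF assms] by simp

lemma fG_digits:
  assumes "fG G x = fG G y" shows "x \<in> UG G k \<longleftrightarrow> y \<in> UG G k"
proof -
  have "(\<Sum>k. (1/4)^k * indicator (UG G k) x) = (\<Sum>k. (1/4::real)^k * indicator (UG G k) y)"
    using assms by (simp add: fG_def)
  then have "indicator (UG G k) x = (indicator (UG G k) y :: real)"
    by (rule digits[rotated 2]) (auto simp: indicator_def)
  then show ?thesis by (auto simp: indicator_def split: if_splits)
qed

lemma linear_mv_left: "linear (\<lambda>g::real^'m^'m. g *v x)"
  by (rule linearI) (auto simp: vec_eq_iff matrix_vector_mult_def sum.distrib sum_distrib_left algebra_simps)

lemma orbit_closed:
  assumes "compact (G::(real^'m^'m) set)"
  shows "closed ((\<lambda>g. g *v x) ` G)"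
proof -
  have "continuous_on G (\<lambda>g::real^'m^'m. g *v x)"
    by (intro linear_continuous_on) (simp add: linear_linear linear_mv_left)
  then show ?thesis
    using assms by (intro compact_imp_closed compact_continuous_image)
qed

lemma sep:
  assumes G: "OG G" "compact G"
    and H: "\<And>k x. x \<in> UG G k \<inter> sphere 0 1 \<Longrightarrow> C *v x \<in> closure (UG G k)"
    and x: "x \<in> sphere (0::real^'m) 1"
  shows "\<exists>g\<in>G. C *v x = g *v x"
proof (rule ccontr)
  assume nex: "\<not> (\<exists>g\<in>G. C *v x = g *v x)"
  let ?O = "(\<lambda>g. g *v x) ` G"
  have "C *v x \<notin> ?O" using nex by auto
  moreover have "open (- ?O)" using orbit_closed[OF G(2)] by (simp add: open_Compl)
  ultimately obtain e where e: "e > 0" "ball (C *v x) e \<subseteq> - ?O"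
    using open_contains_ball by blast
  obtain k where k: "x \<in> Vb k" "Vb k \<subseteq> ball x (e/2)"
    using Vb_basis[of "ball x (e/2)" x] e(1) by auto
  have "x \<in> UG G k" unfolding UG_def using OG_one[OF G(1)] k(1)
    by (intro UN_I[of "mat 1"]) auto
  then have "C *v x \<in> closure (UG G k)" using H x by blast
  then obtain u where u: "u \<in> UG G k" "dist u (C *v x) < e/2"
    using closure_approachable e(1) by (metis half_gt_zero)
  then obtain g v where gv: "g \<in> G" "v \<in> Vb k" "u = g *v v" unfolding UG_def by blast
  have "dist (g *v v) (g *v x) = norm (g *v (v - x))"
    by (simp add: dist_norm matrix_vector_mult_diff_distrib)
  also have "\<dots> = dist v x" using orth_norm[OF OG_orth[OF G(1) gv(1)]] by (simp add: dist_norm)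
  also have "\<dots> < e/2" using gv(2) k(2) by (auto simp: dist_commute)
  finally have "dist (g *v x) (C *v x) < e"
    using u(2) gv(3) dist_triangle[of "g *v x" "C *v x" "g *v v"] by (simp add: dist_commute)
  then have "g *v x \<in> ball (C *v x) e" by (simp add: dist_commute)
  then show False using e(2) gv(1) by blast
qed

lemma orbit_all:
  assumes G: "OG G" and H: "\<And>x. x \<in> sphere (0::real^'m) 1 \<Longrightarrow> \<exists>g\<in>G. C *v x = g *v x"
  shows "\<exists>g\<in>G. C *v x = g *v x"
proof (cases "x = 0")
  case True then show ?thesis using OG_one[OF G] by auto
next
  case False
  define t where "t = inverse (norm x) *\<^sub>R x"
  have "t \<in> sphere 0 1" using False by (simp add: t_def)
  then obtain g where g: "g \<in> G" "C *v t = g *v t" using H by blast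
  have x: "x = norm x *\<^sub>R t" using False by (simp add: t_def)
  have "C *v x = norm x *\<^sub>R (C *v t)" by (subst x) (simp add: matrix_vector_mult_scaleR)
  also have "\<dots> = g *v x" using g(2) by (subst x) (simp add: matrix_vector_mult_scaleR)
  finally show ?thesis using g(1) by blast
qed

lemma max_in_G:
  fixes G :: "(real^'m^'m) set"
  assumes G: "maximal_compact_subgroup_O G" and C: "orthogonal_matrix C"
    and H: "\<And>x. \<exists>g\<in>G. C *v x = g *v x"
  shows "C \<in> G"
proof -
  have OG: "OG G" using G by (simp add: maximal_compact_subgroup_O_def OG_def)
  define K where "K = {C::real^'m^'m. orthogonal_matrix C \<and> (\<forall>x. \<exists>g\<in>G. C *v x = g *v x)}"
  have "matgroup K"
    unfolding matgroup_def
  proof (intro conjI ballI)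
    show "mat 1 \<in> K" unfolding K_def using OG_one[OF OG] orthogonal_matrix_id by fastforce
  next
    fix A B assume A: "A \<in> K" and B: "B \<in> K"
    have "\<exists>g\<in>G. (A ** B) *v x = g *v x" for x
    proof -
      obtain g where g: "g \<in> G" "B *v x = g *v x" using B unfolding K_def by blast
      obtain h where h: "h \<in> G" "A *v (g *v x) = h *v (g *v x)" using A unfolding K_def by blast
      have "(A ** B) *v x = (h ** g) *v x"
        using g h by (simp add: matrix_vector_mul_assoc[symmetric])
      then show ?thesis using OG_mul[OF OG h(1) g(1)] by blast
    qed
    then show "A ** B \<in> K" using A B unfolding K_def by (auto intro: orthogonal_matrix_mul)
  next
    fix A assume A: "A \<in> K"
    then have Ao: "orthogonal_matrix A" unfolding K_def by blast
    show "invertible A" using orth_inv(2)[OF Ao] .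
    have "\<exists>g\<in>G. transpose A *v x = g *v x" for x
    proof -
      let ?y = "transpose A *v x"
      obtain g where g: "g \<in> G" "A *v ?y = g *v ?y" using A unfolding K_def by blast
      have xe: "x = g *v ?y" using g(2) orth_mat_inv[OF Ao] by simp
      have "?y = transpose g *v x" using xe orth_mat_inv(1)[OF OG_orth[OF OG g(1)], of ?y] by metis
      then show ?thesis using OG_tr[OF OG g(1)] by blast
    qed
    then show "matrix_inv A \<in> K" unfolding K_def orth_inv(1)[OF Ao] using Ao by simp
  qed
  moreover have "orbit_equiv G K"
    unfolding orbit_equiv_def
  proof (intro allI set_eqI iffI)
    fix x y assume "y \<in> {g *v x |g. g \<in> G}"
    then obtain g where g: "g \<in> G" "y = g *v x" by blast
    have "g \<in> K" unfolding K_def using g(1) OG_orth[OF OG g(1)] by blast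
    then show "y \<in> {k *v x |k. k \<in> K}" using g by blast
  next
    fix x y assume "y \<in> {k *v x |k. k \<in> K}"
    then obtain k where k: "k \<in> K" "y = k *v x" by blast
    then obtain g where "g \<in> G" "k *v x = g *v x" unfolding K_def by blast
    then show "y \<in> {g *v x |g. g \<in> G}" using k by auto
  qed
  ultimately have "K \<subseteq> G" using G by (simp add: maximal_compact_subgroup_O_def maximal_group_def)
  moreover have "C \<in> K" unfolding K_def using C H by blast
  ultimately show ?thesis by blast
qed

definition Lam :: "(real^'m^'m) set \<Rightarrow> (real^'m) measure" where
  "Lam G = density sig (\<lambda>\<theta>. ennreal (fG G \<theta>))"

lemma borel_to_sig: "f \<in> borel_measurable borel \<Longrightarrow> f \<in> borel_measurable (sig::(real^'m) measure)"
  by (subst measurable_cong_sets[of sig "restrict_space borel (sphere 0 1)" borel borel]) (auto intro: measurable_restrict_space1)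

lemma fG_sig: "OG G \<Longrightarrow> (\<lambda>\<theta>. ennreal (fG G \<theta>)) \<in> borel_measurable (sig::(real^'m) measure)"
  using fG_borel by (intro borel_to_sig) measurable

lemma sets_Lam[simp]: "sets (Lam G) = sphere_borel"
  by (simp add: Lam_def)

lemma space_Lam[simp]: "space (Lam G) = sphere 0 1"
  by (simp add: Lam_def)

lemma fG_le3: "ennreal (fG G x) \<le> 3"
proof -
  have "ennreal (fG G x) \<le> ennreal 3" by (rule ennreal_leI[OF fG_bounds(2)])
  then show ?thesis by simp
qed

lemma emeasure_Lam:
  fixes G :: "(real^'m^'m) set"
  assumes "OG G" "B \<in> sphere_borel"
  shows "emeasure (Lam G) B = (\<integral>\<^sup>+ \<theta>. ennreal (fG G \<theta>) * indicator B \<theta> \<partial>sig)"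
  unfolding Lam_def using assms by (subst emeasure_density) (auto simp: fG_sig)

lemma Lam_ge_sig:
  fixes G :: "(real^'m^'m) set"
  assumes "OG G" "B \<in> sphere_borel"
  shows "emeasure sig B \<le> emeasure (Lam G) B"
proof -
  have "emeasure sig B = (\<integral>\<^sup>+ \<theta>. indicator B \<theta> \<partial>sig)" using assms by simp
  also have "\<dots> \<le> (\<integral>\<^sup>+ \<theta>. ennreal (fG G \<theta>) * indicator B \<theta> \<partial>sig)"
    by (intro nn_integral_mono) (auto simp: indicator_def fG_bounds)
  finally show ?thesis using emeasure_Lam[OF assms] by simp
qed

lemma Lam_finite:
  fixes G :: "(real^'m^'m) set"
  assumes "OG G" shows "finite_measure (Lam G)"
proof
  have "emeasure (Lam G) (space (Lam G)) = (\<integral>\<^sup>+ \<theta>. ennreal (fG G \<theta>) * indicator (sphere 0 1) \<theta> \<partial>sig)"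
    using emeasure_Lam[OF assms, of "sphere 0 1"] by (simp add: sphere_borel_I)
  also have "\<dots> \<le> (\<integral>\<^sup>+ \<theta>. 3 * indicator (sphere 0 1) \<theta> \<partial>(sig::(real^'m) measure))"
    by (intro nn_integral_mono) (auto simp: indicator_def fG_le3)
  also have "\<dots> = 3 * emeasure (sig::(real^'m) measure) (sphere 0 1)"
    using borel_measurable_indicator[of "sphere 0 1" "sig::(real^'m) measure"]
    by (subst nn_integral_cmult) (auto simp: sphere_borel_I)
  also have "\<dots> < \<infinity>" using sig_finite[where 'm='m] by (simp add: ennreal_mult_less_top less_top)
  finally show "emeasure (Lam G) (space (Lam G)) \<noteq> \<infinity>" by simp
qed

lemma Lam_pos:
  fixes G :: "(real^'m^'m) set"
  assumes "OG G" "open W" "p \<in> W \<inter> sphere 0 1"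
  shows "emeasure (Lam G) (W \<inter> sphere (0::real^'m) 1) > 0"
proof -
  have "W \<inter> sphere 0 1 \<in> sphere_borel" using assms by (intro sphere_borel_I) auto
  then show ?thesis
    using sig_pos[OF assms(2,3)] Lam_ge_sig[OF assms(1)] by (meson less_le_trans)
qed

lemma mv_sig:
  assumes g: "orthogonal_matrix (g::real^'m^'m)"
  shows "(\<lambda>\<theta>. g *v \<theta>) \<in> measurable sig sig"
proof -
  have "(\<lambda>\<theta>. g *v \<theta>) \<in> measurable (restrict_space borel (sphere 0 1)) (restrict_space borel (sphere 0 1))"
    by (rule measurable_restrict_space3[OF mvm_borel]) (auto simp: orth_norm[OF g])
  then show ?thesis
    by (subst measurable_cong_sets[of sig "restrict_space borel (sphere 0 1)" sig "restrict_space borel (sphere 0 1)"]) auto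
qed

lemma distr_sig:
  assumes g: "orthogonal_matrix (g::real^'m^'m)"
  shows "distr sig sig (\<lambda>\<theta>. g *v \<theta>) = sig"
proof (rule measure_eqI)
  show "sets (distr sig sig (\<lambda>\<theta>. g *v \<theta>)) = sets sig" by simp
  fix B assume "B \<in> sets (distr sig sig (\<lambda>\<theta>. g *v \<theta>))"
  then have B: "B \<in> sphere_borel" by simp
  have "emeasure (distr sig sig (\<lambda>\<theta>. g *v \<theta>)) B = emeasure sig ((\<lambda>\<theta>. g *v \<theta>) -` B \<inter> space sig)"
    using B by (subst emeasure_distr[OF mv_sig[OF g]]) auto
  also have "(\<lambda>\<theta>. g *v \<theta>) -` B \<inter> space sig = {\<theta> \<in> sphere 0 1. g *v \<theta> \<in> B}" by auto
  also have "emeasure sig \<dots> = emeasure sig B" by (rule sig_inv[OF g B])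
  finally show "emeasure (distr sig sig (\<lambda>\<theta>. g *v \<theta>)) B = emeasure sig B" .
qed

lemma nn_integral_sig_orth:
  assumes g: "orthogonal_matrix (g::real^'m^'m)" and h: "h \<in> borel_measurable sig"
  shows "(\<integral>\<^sup>+ \<theta>. h (g *v \<theta>) \<partial>sig) = (\<integral>\<^sup>+ \<theta>. h \<theta> \<partial>sig)"
proof -
  have "(\<integral>\<^sup>+ \<theta>. h \<theta> \<partial>sig) = (\<integral>\<^sup>+ \<theta>. h \<theta> \<partial>(distr sig sig (\<lambda>\<theta>. g *v \<theta>)))"
    by (simp add: distr_sig[OF g])
  also have "\<dots> = (\<integral>\<^sup>+ \<theta>. h (g *v \<theta>) \<partial>sig)"
    by (rule nn_integral_distr[OF mv_sig[OF g]])
       (use h in \<open>subst measurable_cong_sets[where M'=sig and N'=borel], auto\<close>)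
  finally show ?thesis by simp
qed

lemma Lam_inv:
  fixes G :: "(real^'m^'m) set"
  assumes G: "OG G" and g: "g \<in> G" and B: "B \<in> sphere_borel"
  shows "emeasure (Lam G) {\<theta> \<in> sphere 0 1. g *v \<theta> \<in> B} = emeasure (Lam G) B"
proof -
  have go: "orthogonal_matrix g" by (rule OG_orth[OF G g])
  let ?h = "\<lambda>\<theta>. ennreal (fG G \<theta>) * indicator B \<theta>"
  have hm: "?h \<in> borel_measurable sig"
    using fG_sig[OF G] borel_measurable_indicator[of B sig] B
    by (intro borel_measurable_times_ennreal) auto
  have "emeasure (Lam G) {\<theta> \<in> sphere 0 1. g *v \<theta> \<in> B}
      = (\<integral>\<^sup>+ \<theta>. ennreal (fG G \<theta>) * indicator {\<theta> \<in> sphere 0 1. g *v \<theta> \<in> B} \<theta> \<partial>sig)"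
    by (rule emeasure_Lam[OF G pre_borel[OF B]])
  also have "\<dots> = (\<integral>\<^sup>+ \<theta>. ?h (g *v \<theta>) \<partial>sig)"
    by (rule nn_integral_cong) (auto simp: indicator_def fG_inv[OF G g])
  also have "\<dots> = (\<integral>\<^sup>+ \<theta>. ?h \<theta> \<partial>sig)"
    by (rule nn_integral_sig_orth[OF go hm])
  also have "\<dots> = emeasure (Lam G) B" by (rule emeasure_Lam[OF G B, symmetric])
  finally show ?thesis .
qed

lemma Lam_orth:
  fixes G :: "(real^'m^'m) set" and C :: "real^'m^'m"
  assumes G: "OG G"
    and H: "\<And>B. B \<in> sphere_borel \<Longrightarrow> emeasure (Lam G) {\<theta> \<in> sphere 0 1. C *v \<theta> \<in> B} = emeasure (Lam G) B"
  shows "orthogonal_matrix C"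
proof -
  interpret finite_measure "Lam G" by (rule Lam_finite[OF G])
  let ?S = "sphere (0::real^'m) 1"
  have Sb: "?S \<in> sphere_borel" by (rule sphere_borel_I) auto
  let ?P = "{\<theta> \<in> ?S. C *v \<theta> \<in> ?S}"
  have Pb: "?P \<in> sphere_borel" by (rule pre_borel[OF Sb])
  have eqP: "emeasure (Lam G) ?P = emeasure (Lam G) ?S" by (rule H[OF Sb])
  have W0: "emeasure (Lam G) (?S - ?P) = 0"
    using eqP Pb Sb by (subst emeasure_Diff) (auto simp: emeasure_eq_measure)
  have n1: "norm (C *v \<theta>) = 1" if th: "\<theta> \<in> ?S" for \<theta>
  proof (rule ccontr)
    assume ne: "norm (C *v \<theta>) \<noteq> 1"
    let ?O = "{x::real^'m. norm (C *v x) \<noteq> 1}"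
    have oO: "open ?O"
    proof -
      have "continuous_on UNIV (\<lambda>x::real^'m. norm (C *v x))"
        by (intro continuous_intros linear_continuous_on) (simp add: linear_linear)
      then have "open (UNIV \<inter> (\<lambda>x::real^'m. norm (C *v x)) -` (- {1}))"
        by (intro continuous_open_preimage) auto
      moreover have "UNIV \<inter> (\<lambda>x::real^'m. norm (C *v x)) -` (- {1}) = ?O" by auto
      ultimately show ?thesis by simp
    qed
    have "emeasure (Lam G) (?O \<inter> ?S) > 0" using Lam_pos[OF G oO, of \<theta>] th ne by auto
    moreover have "?O \<inter> ?S = ?S - ?P" by auto
    ultimately show False using W0 by simp
  qed
  have nall: "norm (C *v x) = norm x" for x
  proof (cases "x = 0")
    case True then show ?thesis by simp
  next
    case False
    define t where "t = inverse (norm x) *\<^sub>R x"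
    have t: "t \<in> ?S" using False by (simp add: t_def)
    have x: "x = norm x *\<^sub>R t" using False by (simp add: t_def)
    have "C *v x = norm x *\<^sub>R (C *v t)" by (subst x) (simp add: matrix_vector_mult_scaleR)
    then show ?thesis using n1[OF t] by simp
  qed
  have "orthogonal_transformation (\<lambda>x. C *v x)"
    unfolding orthogonal_transformation using nall by simp
  then show ?thesis by (simp add: orthogonal_transformation_matrix)
qed

lemma Lam_AE:
  fixes G :: "(real^'m^'m) set" and C :: "real^'m^'m"
  assumes G: "OG G" and Co: "orthogonal_matrix C"
    and H: "\<And>B. B \<in> sphere_borel \<Longrightarrow> emeasure (Lam G) {\<theta> \<in> sphere 0 1. C *v \<theta> \<in> B} = emeasure (Lam G) B"
  shows "AE \<theta> in sig. fG G (transpose C *v \<theta>) = fG G \<theta>"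
proof -
  let ?f = "\<lambda>\<theta>. ennreal (fG G \<theta>)"
  let ?f' = "\<lambda>\<theta>. ennreal (fG G (transpose C *v \<theta>))"
  have Do: "orthogonal_matrix (transpose C)" using Co by simp
  have fm: "?f \<in> borel_measurable sig" by (rule fG_sig[OF G])
  have fm': "?f' \<in> borel_measurable sig"
  proof -
    have "(\<lambda>\<theta>. fG G (transpose C *v \<theta>)) \<in> borel_measurable borel"
      using fG_borel[OF G] by measurable
    then show ?thesis by (intro borel_to_sig) measurable
  qed
  have "density sig ?f' = density sig ?f"
  proof (rule measure_eqI)
    show "sets (density sig ?f') = sets (density sig ?f)" by simp
    fix B assume "B \<in> sets (density sig ?f')"
    then have B: "B \<in> sphere_borel" by simp
    let ?h = "\<lambda>\<eta>. ?f \<eta> * indicator B (C *v \<eta>)"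
    have hm: "?h \<in> borel_measurable sig"
    proof -
      have "(\<lambda>\<eta>. C *v \<eta>) \<in> measurable sig sig" by (rule mv_sig[OF Co])
      moreover have "indicator B \<in> borel_measurable sig" using B by (intro borel_measurable_indicator) simp
      ultimately have "(\<lambda>\<eta>. indicator B (C *v \<eta>) :: ennreal) \<in> borel_measurable sig"
        by (rule measurable_compose)
      then show ?thesis using fm by (intro borel_measurable_times_ennreal)
    qed
    have "emeasure (density sig ?f') B = (\<integral>\<^sup>+ \<theta>. ?f' \<theta> * indicator B \<theta> \<partial>sig)"
      using B fm' by (subst emeasure_density) auto
    also have "\<dots> = (\<integral>\<^sup>+ \<theta>. ?h (transpose C *v \<theta>) \<partial>sig)"
      by (rule nn_integral_cong) (simp add: orth_mat_inv[OF Co])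
    also have "\<dots> = (\<integral>\<^sup>+ \<theta>. ?h \<theta> \<partial>sig)"
      by (rule nn_integral_sig_orth[OF Do hm])
    also have "\<dots> = (\<integral>\<^sup>+ \<theta>. ?f \<theta> * indicator {\<theta> \<in> sphere 0 1. C *v \<theta> \<in> B} \<theta> \<partial>sig)"
      by (rule nn_integral_cong) (auto simp: indicator_def)
    also have "\<dots> = emeasure (Lam G) {\<theta> \<in> sphere 0 1. C *v \<theta> \<in> B}"
      by (rule emeasure_Lam[OF G pre_borel[OF B], symmetric])
    also have "\<dots> = emeasure (Lam G) B" by (rule H[OF B])
    also have "\<dots> = emeasure (density sig ?f) B"
      unfolding Lam_def ..
    finally show "emeasure (density sig ?f') B = emeasure (density sig ?f) B" .
  qed
  moreover have "integral\<^sup>N sig ?f' \<noteq> \<infinity>"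
  proof -
    have "integral\<^sup>N sig ?f' \<le> (\<integral>\<^sup>+ \<theta>. 3 * indicator (sphere 0 1) \<theta> \<partial>(sig::(real^'m) measure))"
      by (intro nn_integral_mono) (auto simp: indicator_def fG_le3)
    also have "\<dots> = 3 * emeasure (sig::(real^'m) measure) (sphere 0 1)"
      using borel_measurable_indicator[of "sphere 0 1" "sig::(real^'m) measure"]
      by (subst nn_integral_cmult) (auto simp: sphere_borel_I)
    also have "\<dots> < \<infinity>" using sig_finite[where 'm='m] by (simp add: ennreal_mult_less_top less_top)
    finally show ?thesis by simp
  qed
  ultimately have "AE \<theta> in sig. ?f' \<theta> = ?f \<theta>"
    using finite_density_unique[OF fm' fm] by auto
  then show ?thesis
  proof (rule AE_mp[OF _ AE_I2], intro impI)
    fix \<theta> assume "?f' \<theta> = ?f \<theta>"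
    then show "fG G (transpose C *v \<theta>) = fG G \<theta>"
      using fG_bounds(1)[of G] by (subst (asm) ennreal_inj) (auto intro: order.trans[OF zero_le_one])
  qed
qed

lemma Lam_sub:
  fixes G :: "(real^'m^'m) set" and C :: "real^'m^'m"
  assumes Gm: "maximal_compact_subgroup_O G"
    and H: "\<And>B. B \<in> sphere_borel \<Longrightarrow> emeasure (Lam G) {\<theta> \<in> sphere 0 1. C *v \<theta> \<in> B} = emeasure (Lam G) B"
  shows "C \<in> G"
proof -
  have G: "OG G" using Gm by (simp add: maximal_compact_subgroup_O_def OG_def)
  have cG: "compact G" using Gm by (simp add: maximal_compact_subgroup_O_def)
  have Co: "orthogonal_matrix C" by (rule Lam_orth[OF G H])
  define D where "D = transpose C"
  have Do: "orthogonal_matrix D" using Co by (simp add: D_def)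
  have AE: "AE \<theta> in sig. fG G (D *v \<theta>) = fG G \<theta>"
    unfolding D_def by (rule Lam_AE[OF G Co H])
  have Hk: "D *v x \<in> closure (UG G k)" if x: "x \<in> UG G k \<inter> sphere 0 1" for k x
  proof (rule ccontr)
    assume nx: "D *v x \<notin> closure (UG G k)"
    let ?W = "UG G k \<inter> - ((\<lambda>y. D *v y) -` closure (UG G k))"
    have oW: "open ?W"
    proof (intro open_Int UG_open[OF G])
      have "closed ((\<lambda>y. D *v y) -` closure (UG G k))"
        by (intro continuous_closed_vimage linear_continuous_at) (auto simp: linear_linear)
      then show "open (- ((\<lambda>y. D *v y) -` closure (UG G k)))" by (simp add: open_Compl)
    qed
    have pos: "emeasure sig (?W \<inter> sphere 0 1) > 0"
      using sig_pos[OF oW, of x] x nx by auto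
    have Wb: "?W \<inter> sphere 0 1 \<in> sets sig" using oW by (simp add: sphere_borel_I)
    obtain N where N: "{\<theta> \<in> space sig. \<not> fG G (D *v \<theta>) = fG G \<theta>} \<subseteq> N" "emeasure sig N = 0" "N \<in> sets sig"
      using AE by (rule AE_E)
    have "?W \<inter> sphere 0 1 \<subseteq> N"
    proof
      fix \<theta> assume th: "\<theta> \<in> ?W \<inter> sphere 0 1"
      have "fG G (D *v \<theta>) \<noteq> fG G \<theta>"
      proof
        assume "fG G (D *v \<theta>) = fG G \<theta>"
        then have "D *v \<theta> \<in> UG G k" using th fG_digits by blast
        then show False using th closure_subset by blast
      qed
      then show "\<theta> \<in> N" using N(1) th by auto
    qed
    then have "emeasure sig (?W \<inter> sphere 0 1) \<le> emeasure sig N" by (rule emeasure_mono[OF _ N(3)])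
    then show False using pos N(2) by simp
  qed
  have "\<exists>g\<in>G. D *v x = g *v x" if "x \<in> sphere 0 1" for x
    by (rule sep[OF G cG Hk that])
  then have "\<exists>g\<in>G. D *v x = g *v x" for x by (rule orbit_all[OF G])
  then have "D \<in> G" by (rule max_in_G[OF Gm Do])
  then have "transpose D \<in> G" by (rule OG_tr[OF G])
  then show ?thesis by (simp add: D_def)
qed

definition MM :: "complex^'n^'n \<Rightarrow> complex^'n^'n" where "MM A = A ** cadj A"

lemma MM_entry: "MM A $ i $ j = (\<Sum>l\<in>UNIV. A $ i $ l * cnj (A $ j $ l))"
  by (simp add: MM_def matrix_matrix_mult_def cadj_def)

lemma cconj_entry[simp]: "cconj X $ i $ j = cnj (X $ i $ j)"
  by (simp add: cconj_def)

lemma cadj_entry[simp]: "cadj X $ i $ j = cnj (X $ j $ i)"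
  by (simp add: cadj_def)

lemma cconj_cconj[simp]: "cconj (cconj X) = X"
  by (simp add: vec_eq_iff)

lemma cconj_lin: "cconj (a *\<^sub>R X + b *\<^sub>R Y) = a *\<^sub>R cconj X + b *\<^sub>R cconj Y"
  by (simp add: vec_eq_iff)

lemma cadj_lin: "cadj (a *\<^sub>R X + b *\<^sub>R Y) = a *\<^sub>R cadj X + b *\<^sub>R cadj Y"
  by (simp add: vec_eq_iff)

lemma cadj_MM: "cadj (MM A) = MM A"
  by (simp add: vec_eq_iff MM_entry mult.commute)

lemma cadj_cconj_MM: "cadj (cconj (MM A)) = cconj (MM A)"
  by (simp add: vec_eq_iff MM_entry mult.commute)

definition Qf :: "complex^'n^'n \<Rightarrow> complex^'n \<Rightarrow> complex" where
  "Qf X x = (\<Sum>i\<in>UNIV. \<Sum>j\<in>UNIV. cnj (x $ i) * X $ i $ j * x $ j)"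

lemma scale_entry: "(a *\<^sub>R X + b *\<^sub>R Y) $ i $ j = of_real a * X $ i $ j + of_real b * (Y $ i $ j :: complex)"
  by (simp only: vector_add_component vector_scaleR_component) (simp add: scaleR_conv_of_real)

lemma Qf_lin: "Qf (a *\<^sub>R X + b *\<^sub>R Y) x = of_real a * Qf X x + of_real b * Qf Y x"
proof -
  have "cnj (x $ i) * (a *\<^sub>R X + b *\<^sub>R Y) $ i $ j * x $ j
        = of_real a * (cnj (x $ i) * X $ i $ j * x $ j) + of_real b * (cnj (x $ i) * Y $ i $ j * x $ j)" for i j
    by (simp only: scale_entry) (simp add: algebra_simps)
  then show ?thesis
    by (simp add: Qf_def sum.distrib sum_distrib_left)
qed

lemma triple_swap:
  "(\<Sum>i\<in>I. \<Sum>j\<in>J. \<Sum>l\<in>L. f i j l) = (\<Sum>l\<in>L. \<Sum>i\<in>I. \<Sum>j\<in>J. (f i j l :: complex))"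
proof -
  have "(\<Sum>i\<in>I. \<Sum>j\<in>J. \<Sum>l\<in>L. f i j l) = (\<Sum>i\<in>I. \<Sum>l\<in>L. \<Sum>j\<in>J. f i j l)"
    by (rule sum.cong[OF refl], rule sum.swap)
  also have "\<dots> = (\<Sum>l\<in>L. \<Sum>i\<in>I. \<Sum>j\<in>J. f i j l)" by (rule sum.swap)
  finally show ?thesis .
qed

lemma Qf_MM: "Qf (MM A) x = of_real (\<Sum>l\<in>UNIV. (cmod (\<Sum>i\<in>UNIV. cnj (x $ i) * A $ i $ l))\<^sup>2)"
proof -
  have pt: "cnj (x $ i) * MM A $ i $ j * x $ j = (\<Sum>l\<in>UNIV. (cnj (x $ i) * A $ i $ l) * cnj (cnj (x $ j) * A $ j $ l))" for i j
    by (simp only: MM_entry sum_distrib_left sum_distrib_right) (simp add: mult_ac)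
  have "Qf (MM A) x = (\<Sum>i\<in>UNIV. \<Sum>j\<in>UNIV. \<Sum>l\<in>UNIV. (cnj (x $ i) * A $ i $ l) * cnj (cnj (x $ j) * A $ j $ l))"
    unfolding Qf_def pt ..
  also have "\<dots> = (\<Sum>l\<in>UNIV. \<Sum>i\<in>UNIV. \<Sum>j\<in>UNIV. (cnj (x $ i) * A $ i $ l) * cnj (cnj (x $ j) * A $ j $ l))"
    by (rule triple_swap)
  also have "\<dots> = (\<Sum>l\<in>UNIV. (\<Sum>i\<in>UNIV. cnj (x $ i) * A $ i $ l) * cnj (\<Sum>j\<in>UNIV. cnj (x $ j) * A $ j $ l))"
    by (simp only: cnj_sum sum_product)
  also have "\<dots> = of_real (\<Sum>l\<in>UNIV. (cmod (\<Sum>i\<in>UNIV. cnj (x $ i) * A $ i $ l))\<^sup>2)"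
    by (simp only: complex_norm_square[symmetric] of_real_sum)
  finally show ?thesis .
qed

lemma Qf_cMM: "Qf (cconj (MM A)) x = of_real (\<Sum>l\<in>UNIV. (cmod (\<Sum>i\<in>UNIV. A $ i $ l * x $ i))\<^sup>2)"
proof -
  have pt: "cnj (x $ i) * cconj (MM A) $ i $ j * x $ j = (\<Sum>l\<in>UNIV. cnj (A $ i $ l * x $ i) * (A $ j $ l * x $ j))" for i j
    by (simp only: cconj_entry MM_entry cnj_sum sum_distrib_left sum_distrib_right) (simp add: mult_ac)
  have "Qf (cconj (MM A)) x = (\<Sum>i\<in>UNIV. \<Sum>j\<in>UNIV. \<Sum>l\<in>UNIV. cnj (A $ i $ l * x $ i) * (A $ j $ l * x $ j))"
    unfolding Qf_def pt ..
  also have "\<dots> = (\<Sum>l\<in>UNIV. \<Sum>i\<in>UNIV. \<Sum>j\<in>UNIV. cnj (A $ i $ l * x $ i) * (A $ j $ l * x $ j))"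
    by (rule triple_swap)
  also have "\<dots> = (\<Sum>l\<in>UNIV. cnj (\<Sum>i\<in>UNIV. A $ i $ l * x $ i) * (\<Sum>j\<in>UNIV. A $ j $ l * x $ j))"
    by (simp only: cnj_sum sum_product)
  also have "\<dots> = of_real (\<Sum>l\<in>UNIV. (cmod (\<Sum>i\<in>UNIV. A $ i $ l * x $ i))\<^sup>2)"
    by (simp only: complex_norm_square[symmetric] of_real_sum mult.commute[of "cnj _"])
  finally show ?thesis .
qed

lemma herm_psd_comb:
  assumes "a \<ge> 0" "b \<ge> 0"
  shows "herm_psd (a *\<^sub>R MM A + b *\<^sub>R cconj (MM A))"
  unfolding herm_psd_def
proof (intro conjI allI)
  show "cadj (a *\<^sub>R MM A + b *\<^sub>R cconj (MM A)) = a *\<^sub>R MM A + b *\<^sub>R cconj (MM A)"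
    by (simp add: cadj_lin cadj_MM cadj_cconj_MM)
  fix x :: "complex^'a"
  let ?s = "\<Sum>i\<in>UNIV. \<Sum>j\<in>UNIV. cnj (x $ i) * (a *\<^sub>R MM A + b *\<^sub>R cconj (MM A)) $ i $ j * x $ j"
  have "?s = Qf (a *\<^sub>R MM A + b *\<^sub>R cconj (MM A)) x" by (simp add: Qf_def)
  also have "\<dots> = of_real (a * (\<Sum>l\<in>UNIV. (cmod (\<Sum>i\<in>UNIV. cnj (x $ i) * A $ i $ l))\<^sup>2)
                  + b * (\<Sum>l\<in>UNIV. (cmod (\<Sum>i\<in>UNIV. A $ i $ l * x $ i))\<^sup>2))"
    by (simp add: Qf_lin Qf_MM Qf_cMM)
  finally have eq: "?s = of_real (a * (\<Sum>l\<in>UNIV. (cmod (\<Sum>i\<in>UNIV. cnj (x $ i) * A $ i $ l))\<^sup>2)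
                  + b * (\<Sum>l\<in>UNIV. (cmod (\<Sum>i\<in>UNIV. A $ i $ l * x $ i))\<^sup>2))" .
  show "?s \<in> \<real>" unfolding eq by simp
  show "0 \<le> Re ?s" unfolding eq using assms by (simp add: sum_nonneg)
qed

lemma neg_mv: "(- A) *v x = - (A *v (x::real^'m))"
  by (simp add: vec_eq_iff matrix_vector_mult_def sum_negf)

lemma neg_mat_mv: "(- mat 1) *v x = - (x::real^'m)"
  by (simp add: neg_mv)

lemma uminus_pre: assumes "B \<subseteq> sphere 0 1" shows "uminus ` B = {\<theta> \<in> sphere (0::real^'m) 1. (- mat 1) *v \<theta> \<in> B}"
proof (intro set_eqI iffI)
  fix y assume "y \<in> uminus ` B"
  then obtain b where b: "b \<in> B" "y = - b" by blast
  then show "y \<in> {\<theta> \<in> sphere (0::real^'m) 1. (- mat 1) *v \<theta> \<in> B}"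
    using assms by (auto simp: neg_mat_mv)
next
  fix y assume "y \<in> {\<theta> \<in> sphere (0::real^'m) 1. (- mat 1) *v \<theta> \<in> B}"
  then have "- y \<in> B" by (simp add: neg_mat_mv)
  then show "y \<in> uminus ` B" by (rule rev_image_eqI) simp
qed

lemma uminus_borel:
  assumes "B \<in> sphere_borel" shows "uminus ` B \<in> (sphere_borel :: (real^'m) set set)"
proof -
  have "uminus ` B = {\<theta> \<in> sphere (0::real^'m) 1. (- mat 1) *v \<theta> \<in> B}"
    by (rule uminus_pre[OF sphere_borel_sub[OF assms]])
  then show ?thesis using pre_borel[OF assms] by simp
qed

lemma sphere_components_finite: "finite (components (sphere (0::real^'m) 1))"
proof (cases "CARD('m) \<ge> 2")
  case True
  then have "connected (sphere (0::real^'m) 1)" by (intro connected_sphere) simp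
  moreover have "sphere (0::real^'m) 1 \<noteq> {}" by (simp add: sphere_eq_empty)
  ultimately have "components (sphere (0::real^'m) 1) = {sphere 0 1}"
    by (simp add: components_eq_sing_iff)
  then show ?thesis by simp
next
  case False
  have "CARD('m) \<noteq> 0" by simp
  with False have "CARD('m) = 1" by linarith
  then obtain i0 :: 'm where U: "UNIV = {i0}" by (metis card_1_singletonE)
  have "sphere (0::real^'m) 1 \<subseteq> {vec 1, vec (-1)}"
  proof
    fix x :: "real^'m" assume "x \<in> sphere 0 1"
    then have "norm x = 1" by simp
    moreover have "norm x = \<bar>x $ i0\<bar>" unfolding norm_vec_def U by simp
    ultimately have "x $ i0 = 1 \<or> x $ i0 = -1" by linarith
    moreover have "x = vec (x $ i0)" by (simp add: vec_eq_iff) (metis UNIV_I U singletonD)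
    ultimately show "x \<in> {vec 1, vec (-1)}" by auto
  qed
  then have fin: "finite (sphere (0::real^'m) 1)" by (rule finite_subset) simp
  have "components (sphere (0::real^'m) 1) \<subseteq> Pow (sphere 0 1)"
    using in_components_subset by blast
  then show ?thesis using fin by (rule finite_subset[OF _ finite_Pow_iff[THEN iffD2]])
qed

lemma Xi_eq: "Xi_measure A L B = measure L B *\<^sub>R MM A + measure L (uminus ` B) *\<^sub>R cconj (MM A)"
  by (simp add: Xi_measure_def MM_def)

lemma Re_entry: "Re ((a *\<^sub>R M + b *\<^sub>R cconj M) $ i $ j) = (a + b) * Re (M $ i $ j)"
  by (simp add: algebra_simps)

lemma Im_entry: "Im ((a *\<^sub>R M + b *\<^sub>R cconj M) $ i $ j) = (a - b) * Im (M $ i $ j)"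
  by (simp add: algebra_simps)

lemma Re_MM_pos:
  assumes pd: "sym_pos_def (re_part A ** transpose (re_part A))"
  shows "Re (MM A $ i $ i) > 0"
proof -
  let ?P = "re_part A ** transpose (re_part A)"
  have "axis i 1 \<bullet> (?P *v axis i 1) > 0" using pd by (simp add: sym_pos_def_def)
  moreover have "axis i 1 \<bullet> (?P *v axis i 1) = ?P $ i $ i"
  proof -
    have "(?P *v axis i 1) $ i = ?P $ i $ i"
      unfolding matrix_vector_mult_def axis_def by (simp add: if_distrib[of "\<lambda>t. _ * t"] cong: if_cong)
    then show ?thesis by (simp add: inner_axis')
  qed
  moreover have "?P $ i $ i = (\<Sum>l\<in>UNIV. (Re (A $ i $ l))\<^sup>2)"
    by (simp add: matrix_matrix_mult_def re_part_def transpose_def power2_eq_square)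
  moreover have "Re (MM A $ i $ i) = (\<Sum>l\<in>UNIV. (Re (A $ i $ l))\<^sup>2 + (Im (A $ i $ l))\<^sup>2)"
    by (simp add: MM_entry power2_eq_square)
  moreover have "(\<Sum>l\<in>UNIV. (Re (A $ i $ l))\<^sup>2) \<le> (\<Sum>l\<in>UNIV. (Re (A $ i $ l))\<^sup>2 + (Im (A $ i $ l))\<^sup>2)"
    by (intro sum_mono) simp
  ultimately show ?thesis by linarith
qed

lemma Im_MM:
  "Im (MM A $ i $ j) = (im_part A ** transpose (re_part A) - re_part A ** transpose (im_part A)) $ i $ j"
proof -
  have "Im (MM A $ i $ j) = (\<Sum>l\<in>UNIV. Im (A $ i $ l) * Re (A $ j $ l) - Re (A $ i $ l) * Im (A $ j $ l))"
    by (simp add: MM_entry)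
  also have "\<dots> = (\<Sum>l\<in>UNIV. Im (A $ i $ l) * Re (A $ j $ l)) - (\<Sum>l\<in>UNIV. Re (A $ i $ l) * Im (A $ j $ l))"
    by (rule sum_subtractf)
  also have "\<dots> = (im_part A ** transpose (re_part A) - re_part A ** transpose (im_part A)) $ i $ j"
    by (simp add: matrix_matrix_mult_def re_part_def im_part_def transpose_def)
  finally show ?thesis .
qed

lemma mv_neg: "A *v (- x) = - (A *v (x::real^'m))"
  by (simp add: vec_eq_iff matrix_vector_mult_def sum_negf)

theorem lemmaA5:
  fixes G :: "(real^'m^'m) set" and A :: "complex^'n^'n"
  assumes G: "maximal_compact_subgroup_O G"
    and pd: "sym_pos_def (re_part A ** transpose (re_part A))"
    and a: "- mat 1 \<notin> G \<Longrightarrow>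
              im_part A ** transpose (re_part A) - re_part A ** transpose (im_part A) \<noteq> 0"
    and b: "- mat 1 \<in> G \<Longrightarrow> im_part A = 0"
    and m: "CARD('m) = 2 \<or> - mat 1 \<in> G"
  shows "\<exists>\<Lambda> :: (real^'m) measure.
           sets \<Lambda> = sphere_borel \<and> finite_measure \<Lambda> \<and>
           (\<forall>B \<in> sphere_borel. Xi_measure A \<Lambda> (uminus ` B) = cconj (Xi_measure A \<Lambda> B)) \<and>
           (\<forall>B \<in> sphere_borel. herm_psd (Xi_measure A \<Lambda> B)) \<and>
           finite (components (mat_supp (Xi_measure A \<Lambda>))) \<and>
           S_dom (Xi_measure A \<Lambda>) = G"
proof -
  have OG: "OG G" using G by (simp add: maximal_compact_subgroup_O_def OG_def)
  define L where "L = Lam G"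
  interpret L: finite_measure L unfolding L_def by (rule Lam_finite[OF OG])
  have sL: "sets L = sphere_borel" by (simp add: L_def)
  define M where "M = MM A"
  have Xi: "Xi_measure A L B = measure L B *\<^sub>R M + measure L (uminus ` B) *\<^sub>R cconj M" for B
    by (simp add: Xi_eq M_def)
  have mpos: "Re (M $ i $ i) > 0" for i unfolding M_def by (rule Re_MM_pos[OF pd])
  have Lpos: "measure L (W \<inter> sphere 0 1) > 0" if "open W" "p \<in> W \<inter> sphere 0 1" for W p
  proof -
    have "emeasure L (W \<inter> sphere 0 1) > 0" unfolding L_def by (rule Lam_pos[OF OG that])
    then show ?thesis by (simp add: L.emeasure_eq_measure)
  qed
  \<comment> \<open>Hermitian\<close>
  have herm: "Xi_measure A L (uminus ` B) = cconj (Xi_measure A L B)" for B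
  proof -
    have "uminus ` uminus ` B = B" by (simp add: image_image)
    then show ?thesis by (simp add: Xi cconj_lin add.commute)
  qed
  \<comment> \<open>positive semidefinite\<close>
  have psd: "herm_psd (Xi_measure A L B)" for B
    unfolding Xi M_def by (rule herm_psd_comb) auto
  \<comment> \<open>support\<close>
  have supp: "mat_supp (Xi_measure A L) = sphere 0 1"
  proof
    show "mat_supp (Xi_measure A L) \<subseteq> sphere 0 1" by (auto simp: mat_supp_def)
    show "sphere 0 1 \<subseteq> mat_supp (Xi_measure A L)"
    proof
      fix \<theta> :: "real^'m" assume th: "\<theta> \<in> sphere 0 1"
      have "Xi_measure A L (U \<inter> sphere 0 1) \<noteq> 0" if U: "open U" "\<theta> \<in> U" for U
      proof
        assume z: "Xi_measure A L (U \<inter> sphere 0 1) = 0"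
        let ?i = "undefined :: 'n"
        have "Re (Xi_measure A L (U \<inter> sphere 0 1) $ ?i $ ?i)
              = (measure L (U \<inter> sphere 0 1) + measure L (uminus ` (U \<inter> sphere 0 1))) * Re (M $ ?i $ ?i)"
          unfolding Xi by (rule Re_entry)
        moreover have "measure L (U \<inter> sphere 0 1) > 0" using Lpos[OF U(1), of \<theta>] th U by auto
        moreover have "measure L (uminus ` (U \<inter> sphere 0 1)) \<ge> 0" by simp
        ultimately have "Re (Xi_measure A L (U \<inter> sphere 0 1) $ ?i $ ?i) > 0"
          using mpos[of ?i] by (simp add: add_pos_nonneg)
        then show False using z by simp
      qed
      then show "\<theta> \<in> mat_supp (Xi_measure A L)" using th by (auto simp: mat_supp_def)
    qed
  qed
  \<comment> \<open>symmetry of L if -I in G\<close>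
  have Lsym: "measure L (uminus ` X) = measure L X" if "- mat 1 \<in> G" "X \<in> sphere_borel" for X
  proof -
    have "uminus ` X = {\<theta> \<in> sphere 0 1. (- mat 1) *v \<theta> \<in> X}"
      by (rule uminus_pre[OF sphere_borel_sub[OF that(2)]])
    then have "emeasure L (uminus ` X) = emeasure L X"
      unfolding L_def using Lam_inv[OF OG that(1) that(2)] by simp
    then show ?thesis by (simp add: L.emeasure_eq_measure)
  qed
  \<comment> \<open>S_dom\<close>
  have Sdom: "S_dom (Xi_measure A L) = G"
  proof
    show "G \<subseteq> S_dom (Xi_measure A L)"
    proof
      fix g assume g: "g \<in> G"
      have "Xi_measure A L {\<theta> \<in> sphere 0 1. g *v \<theta> \<in> B} = Xi_measure A L B" if B: "B \<in> sphere_borel" for B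
      proof -
        have e1: "measure L {\<theta> \<in> sphere 0 1. g *v \<theta> \<in> B} = measure L B"
          using Lam_inv[OF OG g B] unfolding L_def by (simp add: measure_def)
        have uB: "uminus ` B \<in> sphere_borel" by (rule uminus_borel[OF B])
        have eq: "uminus ` {\<theta> \<in> sphere 0 1. g *v \<theta> \<in> B} = {\<theta> \<in> sphere 0 1. g *v \<theta> \<in> uminus ` B}"
        proof (intro set_eqI iffI)
          fix y assume "y \<in> uminus ` {\<theta> \<in> sphere 0 1. g *v \<theta> \<in> B}"
          then obtain t where t: "t \<in> sphere 0 1" "g *v t \<in> B" "y = - t" by blast
          then have gy: "g *v y = - (g *v t)" by (simp add: mv_neg)
          have "g *v y \<in> uminus ` B" by (rule rev_image_eqI[OF t(2)]) (rule gy)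
          then show "y \<in> {\<theta> \<in> sphere 0 1. g *v \<theta> \<in> uminus ` B}" using t by simp
        next
          fix y assume "y \<in> {\<theta> \<in> sphere 0 1. g *v \<theta> \<in> uminus ` B}"
          then obtain c where c: "y \<in> sphere 0 1" "c \<in> B" "g *v y = - c" by blast
          then have "g *v (- y) = c" by (simp add: mv_neg)
          then have "- y \<in> {\<theta> \<in> sphere 0 1. g *v \<theta> \<in> B}" using c by simp
          then show "y \<in> uminus ` {\<theta> \<in> sphere 0 1. g *v \<theta> \<in> B}" by (rule rev_image_eqI) simp
        qed
        have e2: "measure L (uminus ` {\<theta> \<in> sphere 0 1. g *v \<theta> \<in> B}) = measure L (uminus ` B)"
          unfolding eq using Lam_inv[OF OG g uB] unfolding L_def by (simp add: measure_def)
        show ?thesis unfolding Xi e1 e2 ..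
      qed
      then show "g \<in> S_dom (Xi_measure A L)" by (simp add: S_dom_def)
    qed
    show "S_dom (Xi_measure A L) \<subseteq> G"
    proof
      fix C assume "C \<in> S_dom (Xi_measure A L)"
      then have HC: "Xi_measure A L {\<theta> \<in> sphere 0 1. C *v \<theta> \<in> B} = Xi_measure A L B"
        if "B \<in> sphere_borel" for B using that by (simp add: S_dom_def)
      have "emeasure (Lam G) {\<theta> \<in> sphere 0 1. C *v \<theta> \<in> B} = emeasure (Lam G) B"
        if B: "B \<in> sphere_borel" for B
      proof -
        let ?X = "{\<theta> \<in> sphere 0 1. C *v \<theta> \<in> B}"
        have Xb: "?X \<in> sphere_borel" by (rule pre_borel[OF B])
        define p where "p = measure L ?X"
        define q where "q = measure L (uminus ` ?X)"
        define p' where "p' = measure L B"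
        define q' where "q' = measure L (uminus ` B)"
        have E: "p *\<^sub>R M + q *\<^sub>R cconj M = p' *\<^sub>R M + q' *\<^sub>R cconj M"
          using HC[OF B] unfolding Xi p_def q_def p'_def q'_def .
        let ?i = "undefined :: 'n"
        have "(p + q) * Re (M $ ?i $ ?i) = (p' + q') * Re (M $ ?i $ ?i)"
          using arg_cong[OF E, of "\<lambda>X. Re (X $ ?i $ ?i)"] by (simp only: Re_entry)
        then have sum: "p + q = p' + q'" using mpos[of ?i] by simp
        have "p = p'"
        proof (cases "- mat 1 \<in> G")
          case True
          then have "q = p" "q' = p'" unfolding p_def q_def p'_def q'_def
            using Lsym[OF True Xb] Lsym[OF True B] by auto
          then show ?thesis using sum by simp
        next
          case False
          then obtain i j where ij: "(im_part A ** transpose (re_part A) - re_part A ** transpose (im_part A)) $ i $ j \<noteq> 0"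
            using a by (auto simp: vec_eq_iff)
          then have imz: "Im (M $ i $ j) \<noteq> 0" unfolding M_def by (simp add: Im_MM)
          have "(p - q) * Im (M $ i $ j) = (p' - q') * Im (M $ i $ j)"
            using arg_cong[OF E, of "\<lambda>X. Im (X $ i $ j)"] by (simp only: Im_entry)
          then have "p - q = p' - q'" using imz by simp
          then show ?thesis using sum by simp
        qed
        then show ?thesis unfolding p_def p'_def L_def[symmetric]
          by (simp add: L.emeasure_eq_measure)
      qed
      then show "C \<in> G" by (rule Lam_sub[OF G])
    qed
  qed
  show ?thesis
  proof (intro exI[of _ L] conjI ballI)
    show "sets L = sphere_borel" by (rule sL)
    show "finite_measure L" by (rule L.finite_measure_axioms)
    show "Xi_measure A L (uminus ` B) = cconj (Xi_measure A L B)" for B by (rule herm)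
    show "herm_psd (Xi_measure A L B)" for B by (rule psd)
    show "finite (components (mat_supp (Xi_measure A L)))" unfolding supp by (rule sphere_components_finite)
    show "S_dom (Xi_measure A L) = G" by (rule Sdom)
  qed
qed

end
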